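(* Let $(G,\preceq)$ be an oriented group with positive cone $C=\{x\in G\mid\mathbf{1}\preceq x\}$, and let $H$ be a subgroup of $G$. On the quotient set $G/H=\{\overline{x}=x\cdot H\mid x\in G\}$ define $\overline{x}\sqsubseteq\overline{y}\iff x^{-1}\cdot y\in C\cdot H$. Then $(G/H,\sqsubseteq)$ is an oriented set if and only if $$(\ast)\qquad \text{for all } q,r\in G:\ \mathbf{1}\preceq q\ \wedge\ \mathbf{1}\preceq r\ \wedge\ q\cdot r\in H\implies q\in H\wedge r\in H.$$ Moreover, if $(\ast)$ holds and $H$ is a normal subgroup of $G$, then $(G/H,\sqsubseteq)$ is an oriented group.
   Context: An orientation is a reflexive, antisymmetric binary relation; an oriented set is a set with an orientation. An oriented group is a group $G$ (operation $\cdot$, neutral element $\mathbf{1}$) with an orientation $\preceq$ such that $x\preceq y$ implies $x\cdot z\preceq y\cdot z$ and $z\cdot x\preceq z\cdot y$ for all $x,y,z\in G$. *)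

theory Defs
  imports "HOL-Algebra.Left_Coset"
begin

definition orientation_on :: "'b set \<Rightarrow> ('b \<Rightarrow> 'b \<Rightarrow> bool) \<Rightarrow> bool" where
  "orientation_on S R \<longleftrightarrow>
     (\<forall>x\<in>S. R x x) \<and> (\<forall>x\<in>S. \<forall>y\<in>S. R x y \<and> R y x \<longrightarrow> x = y)"

definition oriented_group :: "('a, 'c) monoid_scheme \<Rightarrow> ('a \<Rightarrow> 'a \<Rightarrow> bool) \<Rightarrow> bool" where
  "oriented_group G R \<longleftrightarrow> group G \<and> orientation_on (carrier G) R \<and>
     (\<forall>x\<in>carrier G. \<forall>y\<in>carrier G. \<forall>z\<in>carrier G.
        R x y \<longrightarrow> R (x \<otimes>\<^bsub>G\<^esub> z) (y \<otimes>\<^bsub>G\<^esub> z) \<and> R (z \<otimes>\<^bsub>G\<^esub> x) (z \<otimes>\<^bsub>G\<^esub> y))"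

definition pos_cone :: "('a, 'c) monoid_scheme \<Rightarrow> ('a \<Rightarrow> 'a \<Rightarrow> bool) \<Rightarrow> 'a set" where
  "pos_cone G R = {x \<in> carrier G. R \<one>\<^bsub>G\<^esub> x}"

text \<open>The induced relation on left cosets xH: xH below yH iff inv x * y is in C H
  (expressed via representatives; it is independent of them for an oriented group).\<close>
definition quot_rel :: "('a, 'c) monoid_scheme \<Rightarrow> ('a \<Rightarrow> 'a \<Rightarrow> bool) \<Rightarrow> 'a set \<Rightarrow> 'a set \<Rightarrow> 'a set \<Rightarrow> bool" where
  "quot_rel G R H A B \<longleftrightarrow> (\<exists>x\<in>carrier G. \<exists>y\<in>carrier G.
      A = x <#\<^bsub>G\<^esub> H \<and> B = y <#\<^bsub>G\<^esub> H \<and>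
      inv\<^bsub>G\<^esub> x \<otimes>\<^bsub>G\<^esub> y \<in> pos_cone G R <#>\<^bsub>G\<^esub> H)"

end

theory Submission
  imports Defs
begin

locale og_ctx =
  fixes G :: "('a, 'c) monoid_scheme" (structure) and R :: "'a \<Rightarrow> 'a \<Rightarrow> bool" and H :: "'a set"
  assumes og: "oriented_group G R" and sg: "subgroup H G"
begin

interpretation group G using og unfolding oriented_group_def by blast
interpretation subgroup H G by (rule sg)

lemma grp: "group G" by (rule is_group)

lemma R_refl: "x \<in> carrier G \<Longrightarrow> R x x"
  using og unfolding oriented_group_def orientation_on_def by blast

lemma R_anti: "x \<in> carrier G \<Longrightarrow> y \<in> carrier G \<Longrightarrow> R x y \<Longrightarrow> R y x \<Longrightarrow> x = y"
  using og unfolding oriented_group_def orientation_on_def by blast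

lemma R_r: "x \<in> carrier G \<Longrightarrow> y \<in> carrier G \<Longrightarrow> z \<in> carrier G \<Longrightarrow> R x y \<Longrightarrow> R (x \<otimes> z) (y \<otimes> z)"
  using og unfolding oriented_group_def by blast

lemma R_l: "x \<in> carrier G \<Longrightarrow> y \<in> carrier G \<Longrightarrow> z \<in> carrier G \<Longrightarrow> R x y \<Longrightarrow> R (z \<otimes> x) (z \<otimes> y)"
  using og unfolding oriented_group_def by blast

lemma canc1 [simp]: "a \<in> carrier G \<Longrightarrow> x \<in> carrier G \<Longrightarrow> a \<otimes> inv x \<otimes> x = a"
  by (simp add: m_assoc)

lemma canc2 [simp]: "a \<in> carrier G \<Longrightarrow> x \<in> carrier G \<Longrightarrow> a \<otimes> x \<otimes> inv x = a"
  by (simp add: m_assoc)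

lemma canc3 [simp]: "a \<in> carrier G \<Longrightarrow> x \<in> carrier G \<Longrightarrow> inv x \<otimes> (x \<otimes> a) = a"
  by (metis m_assoc l_inv l_one inv_closed)

lemma canc4 [simp]: "a \<in> carrier G \<Longrightarrow> x \<in> carrier G \<Longrightarrow> x \<otimes> (inv x \<otimes> a) = a"
  by (metis m_assoc r_inv l_one inv_closed)

lemma conj_pos:
  assumes c: "c \<in> carrier G" "R \<one> c" and g: "g \<in> carrier G"
  shows "R \<one> (g \<otimes> c \<otimes> inv g)"
proof -
  have "R (g \<otimes> \<one>) (g \<otimes> c)" using R_l[OF _ c(1) g c(2)] by simp
  hence "R g (g \<otimes> c)" using g by simp
  hence "R (g \<otimes> inv g) (g \<otimes> c \<otimes> inv g)" using R_r[of g "g \<otimes> c" "inv g"] g c by simp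
  thus ?thesis using g by simp
qed

lemma CH_iff: "a \<in> pos_cone G R <#> H \<longleftrightarrow> (\<exists>c h. c \<in> carrier G \<and> R \<one> c \<and> h \<in> H \<and> a = c \<otimes> h)"
  unfolding pos_cone_def set_mult_def by auto

lemma CH_carrier: "a \<in> pos_cone G R <#> H \<Longrightarrow> a \<in> carrier G"
  unfolding CH_iff by auto

lemma CH_closed:
  assumes a: "a \<in> pos_cone G R <#> H" and h: "h \<in> H" and k: "k \<in> H"
  shows "h \<otimes> a \<otimes> k \<in> pos_cone G R <#> H"
proof -
  obtain c h0 where c: "c \<in> carrier G" "R \<one> c" "h0 \<in> H" "a = c \<otimes> h0"
    using a unfolding CH_iff by blast
  have hc: "h \<in> carrier G" "k \<in> carrier G" "h0 \<in> carrier G" using h k c by auto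
  have e: "h \<otimes> a \<otimes> k = (h \<otimes> c \<otimes> inv h) \<otimes> (h \<otimes> h0 \<otimes> k)"
  proof -
    have "(h \<otimes> c \<otimes> inv h) \<otimes> (h \<otimes> h0 \<otimes> k) = ((h \<otimes> c \<otimes> inv h) \<otimes> h) \<otimes> h0 \<otimes> k"
      using hc c(1) by (simp add: m_assoc)
    also have "\<dots> = h \<otimes> c \<otimes> h0 \<otimes> k" using hc c(1) by simp
    also have "\<dots> = h \<otimes> a \<otimes> k" using hc c(1) c(4) by (simp add: m_assoc)
    finally show ?thesis by (rule sym)
  qed
  have p: "R \<one> (h \<otimes> c \<otimes> inv h)" using conj_pos c(1,2) hc(1) by blast
  have q: "h \<otimes> h0 \<otimes> k \<in> H" using h k c(3) sg subgroup.m_closed by metis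
  have r: "h \<otimes> c \<otimes> inv h \<in> carrier G" using hc c(1) by simp
  show ?thesis unfolding CH_iff e using p q r by blast
qed

lemma lcos_eq_iff:
  assumes x: "x \<in> carrier G" and y: "y \<in> carrier G"
  shows "x <# H = y <# H \<longleftrightarrow> inv x \<otimes> y \<in> H"
proof
  assume "x <# H = y <# H"
  hence "y \<in> x <# H" using lcos_self[OF y sg] by simp
  thus "inv x \<otimes> y \<in> H" using lcos_module_imp[OF grp x] by blast
next
  assume "inv x \<otimes> y \<in> H"
  hence 1: "y \<in> x <# H" using lcos_module_rev[OF grp x y] by blast
  have 2: "y \<in> y <# H" using lcos_self[OF y sg] .
  have 3: "x <# H \<in> lcosets H" "y <# H \<in> lcosets H" using x y unfolding LCOSETS_def by auto
  show "x <# H = y <# H" using lcos_disjoint[OF sg 3] 1 2 by blast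
qed

lemma quot_rel_iff:
  assumes x: "x \<in> carrier G" and y: "y \<in> carrier G"
  shows "quot_rel G R H (x <# H) (y <# H) \<longleftrightarrow> inv x \<otimes> y \<in> pos_cone G R <#> H"
proof
  assume "inv x \<otimes> y \<in> pos_cone G R <#> H"
  thus "quot_rel G R H (x <# H) (y <# H)" unfolding quot_rel_def using x y by blast
next
  assume "quot_rel G R H (x <# H) (y <# H)"
  then obtain x' y' where xy: "x' \<in> carrier G" "y' \<in> carrier G" "x <# H = x' <# H"
    "y <# H = y' <# H" "inv x' \<otimes> y' \<in> pos_cone G R <#> H" unfolding quot_rel_def by blast
  have h1: "inv x \<otimes> x' \<in> H" using lcos_eq_iff xy x by blast
  have h2: "inv y' \<otimes> y \<in> H" using lcos_eq_iff xy y by metis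
  have "(inv x \<otimes> x') \<otimes> (inv x' \<otimes> y') \<otimes> (inv y' \<otimes> y) \<in> pos_cone G R <#> H"
    using CH_closed[OF xy(5) h1 h2] .
  moreover have "(inv x \<otimes> x') \<otimes> (inv x' \<otimes> y') \<otimes> (inv y' \<otimes> y) = inv x \<otimes> y"
  proof -
    have "(inv x \<otimes> x') \<otimes> (inv x' \<otimes> y') \<otimes> (inv y' \<otimes> y) = (inv x \<otimes> x' \<otimes> inv x') \<otimes> (y' \<otimes> inv y') \<otimes> y"
      using x y xy by (simp add: m_assoc)
    also have "\<dots> = inv x \<otimes> y" using x y xy by simp
    finally show ?thesis .
  qed
  ultimately show "inv x \<otimes> y \<in> pos_cone G R <#> H" by simp
qed

abbreviation (input) star where
  "star \<equiv> (\<forall>q\<in>carrier G. \<forall>r\<in>carrier G.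
              R \<one> q \<and> R \<one> r \<and> q \<otimes> r \<in> H \<longrightarrow> q \<in> H \<and> r \<in> H)"

lemma lcos_in: "x \<in> carrier G \<Longrightarrow> x <# H \<in> lcosets H"
  unfolding LCOSETS_def by auto

lemma lcosE: "A \<in> lcosets H \<Longrightarrow> (\<And>x. x \<in> carrier G \<Longrightarrow> A = x <# H \<Longrightarrow> P) \<Longrightarrow> P"
  unfolding LCOSETS_def by auto

lemma oneG: "\<one> \<in> carrier G" by simp

lemma one_lcos: "\<one> <# H = H"
  using lcos_mult_one subset by blast

lemma part1_fwd:
  assumes ori: "orientation_on (lcosets H) (quot_rel G R H)"
  shows star
proof (intro ballI impI)
  fix q r assume qr: "q \<in> carrier G" "r \<in> carrier G" "R \<one> q \<and> R \<one> r \<and> q \<otimes> r \<in> H"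
  have a: "quot_rel G R H (\<one> <# H) (q <# H)"
    unfolding quot_rel_iff[OF oneG qr(1)] CH_iff using qr by (intro exI[of _ q] exI[of _ \<one>]) auto
  have "inv q = r \<otimes> inv (q \<otimes> r)" using qr by (simp add: inv_mult_group m_assoc)
  moreover have "inv (q \<otimes> r) \<in> H" using qr by auto
  ultimately have b: "quot_rel G R H (q <# H) (\<one> <# H)"
    unfolding quot_rel_iff[OF qr(1) oneG] CH_iff using qr by auto
  have "\<one> <# H = q <# H"
    using ori a b lcos_in[OF oneG] lcos_in[OF qr(1)] unfolding orientation_on_def by blast
  hence qH: "q \<in> H" using lcos_eq_iff[OF oneG qr(1)] qr(1) by simp
  have "r = inv q \<otimes> (q \<otimes> r)" using qr by simp
  also have "\<dots> \<in> H" using qH qr sg subgroup.m_closed subgroup.m_inv_closed by metis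
  finally show "q \<in> H \<and> r \<in> H" using qH by simp
qed

lemma part1_bwd:
  assumes st: star
  shows "orientation_on (lcosets H) (quot_rel G R H)"
  unfolding orientation_on_def
proof (intro conjI ballI impI)
  fix A assume "A \<in> lcosets H"
  then obtain x where x: "x \<in> carrier G" "A = x <# H" by (rule lcosE)
  show "quot_rel G R H A A" unfolding x(2) quot_rel_iff[OF x(1) x(1)] CH_iff
    using x R_refl[of \<one>] by (intro exI[of _ \<one>]) auto
next
  fix A B assume "A \<in> lcosets H" "B \<in> lcosets H" and ab: "quot_rel G R H A B \<and> quot_rel G R H B A"
  then obtain x y where x: "x \<in> carrier G" "A = x <# H" and y: "y \<in> carrier G" "B = y <# H"
    by (metis lcosE)
  obtain c h where c: "c \<in> carrier G" "R \<one> c" "h \<in> H" "inv x \<otimes> y = c \<otimes> h"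
    using ab unfolding x(2) y(2) quot_rel_iff[OF x(1) y(1)] CH_iff by blast
  obtain c' h' where c': "c' \<in> carrier G" "R \<one> c'" "h' \<in> H" "inv y \<otimes> x = c' \<otimes> h'"
    using ab unfolding x(2) y(2) quot_rel_iff[OF y(1) x(1)] CH_iff by blast
  have hc: "h \<in> carrier G" "h' \<in> carrier G" using c c' by auto
  have ab1: "(inv x \<otimes> y) \<otimes> (inv y \<otimes> x) = \<one>" using x y by (simp add: m_assoc)
  have "c \<otimes> (h \<otimes> c' \<otimes> inv h) = (c \<otimes> h) \<otimes> c' \<otimes> inv h" using c c' hc by (simp add: m_assoc)
  also have "\<dots> = (c \<otimes> h) \<otimes> (c' \<otimes> h') \<otimes> inv h' \<otimes> inv h" using c c' hc by (simp add: m_assoc)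
  also have "\<dots> = inv h' \<otimes> inv h" using ab1 c c' hc by simp
  finally have "c \<otimes> (h \<otimes> c' \<otimes> inv h) \<in> H" using c c' hc by auto
  moreover have "R \<one> (h \<otimes> c' \<otimes> inv h)" using conj_pos c' hc by blast
  ultimately have "c \<in> H" using st c c' hc by blast
  hence "inv x \<otimes> y \<in> H" using c by auto
  thus "A = B" using lcos_eq_iff x y by simp
qed

lemma part2:
  assumes st: star and nm: "H \<lhd> G"
  shows "oriented_group (G LMod H) (quot_rel G R H)"
proof -
  interpret N: normal H G by (rule nm)
  have lr: "x <# H = H #> x" if "x \<in> carrier G" for x using N.coset_eq that by simp
  have "lcosets H = rcosets H" unfolding LCOSETS_def RCOSETS_def using lr by auto
  hence eq: "G LMod H = G Mod H" unfolding LFactGroup_def FactGroup_def by simp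
  have mul: "(x <# H) <#> (z <# H) = (x \<otimes> z) <# H" if "x \<in> carrier G" "z \<in> carrier G" for x z
    using that lr N.rcos_sum by simp
  show ?thesis unfolding oriented_group_def
  proof (intro conjI ballI impI)
    show "group (G LMod H)" unfolding eq by (rule N.factorgroup_is_group)
    show "orientation_on (carrier (G LMod H)) (quot_rel G R H)"
      using part1_bwd[OF st] unfolding LFactGroup_def by simp
  next
    fix X Y Z assume XYZ: "X \<in> carrier (G LMod H)" "Y \<in> carrier (G LMod H)" "Z \<in> carrier (G LMod H)"
      and r: "quot_rel G R H X Y"
    obtain x y z where x: "x \<in> carrier G" "X = x <# H" and y: "y \<in> carrier G" "Y = y <# H"
      and z: "z \<in> carrier G" "Z = z <# H"
      using XYZ unfolding LFactGroup_def by (auto elim!: lcosE)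
    obtain c h where c: "c \<in> carrier G" "R \<one> c" "h \<in> H" "inv x \<otimes> y = c \<otimes> h"
      using r unfolding x(2) y(2) quot_rel_iff[OF x(1) y(1)] CH_iff by blast
    have hc: "h \<in> carrier G" using c by auto
    have m1: "X \<otimes>\<^bsub>G LMod H\<^esub> Z = (x \<otimes> z) <# H" "Y \<otimes>\<^bsub>G LMod H\<^esub> Z = (y \<otimes> z) <# H"
      "Z \<otimes>\<^bsub>G LMod H\<^esub> X = (z \<otimes> x) <# H" "Z \<otimes>\<^bsub>G LMod H\<^esub> Y = (z \<otimes> y) <# H"
      using x y z mul unfolding LFactGroup_def by auto
    have "inv (x \<otimes> z) \<otimes> (y \<otimes> z) = inv z \<otimes> (inv x \<otimes> y) \<otimes> z"
      using x y z by (simp add: inv_mult_group m_assoc)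
    also have "\<dots> = (inv z \<otimes> c \<otimes> inv (inv z)) \<otimes> (inv z \<otimes> h \<otimes> z)"
      using c hc z by (simp add: m_assoc)
    also have "\<dots> \<in> pos_cone G R <#> H"
      unfolding CH_iff using conj_pos[OF c(1,2), of "inv z"] z c hc N.inv_op_closed1[OF z(1) c(3)]
      by (intro exI[of _ "inv z \<otimes> c \<otimes> inv (inv z)"] exI[of _ "inv z \<otimes> h \<otimes> z"]) auto
    finally have 1: "quot_rel G R H (X \<otimes>\<^bsub>G LMod H\<^esub> Z) (Y \<otimes>\<^bsub>G LMod H\<^esub> Z)"
      unfolding m1 using quot_rel_iff x y z by auto
    have "inv (z \<otimes> x) \<otimes> (z \<otimes> y) = inv x \<otimes> y"
      using x y z by (simp add: inv_mult_group m_assoc)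
    hence 2: "quot_rel G R H (Z \<otimes>\<^bsub>G LMod H\<^esub> X) (Z \<otimes>\<^bsub>G LMod H\<^esub> Y)"
      unfolding m1 using quot_rel_iff x y z r by auto
    show "quot_rel G R H (X \<otimes>\<^bsub>G LMod H\<^esub> Z) (Y \<otimes>\<^bsub>G LMod H\<^esub> Z)" using 1 .
    show "quot_rel G R H (Z \<otimes>\<^bsub>G LMod H\<^esub> X) (Z \<otimes>\<^bsub>G LMod H\<^esub> Y)" using 2 .
  qed
qed

end

theorem mainTheorem11:
  fixes G :: "('a, 'c) monoid_scheme" and R :: "'a \<Rightarrow> 'a \<Rightarrow> bool" and H :: "'a set"
  assumes "oriented_group G R" and "subgroup H G"
  shows "(orientation_on (lcosets\<^bsub>G\<^esub> H) (quot_rel G R H) \<longleftrightarrow>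
           (\<forall>q\<in>carrier G. \<forall>r\<in>carrier G.
              R \<one>\<^bsub>G\<^esub> q \<and> R \<one>\<^bsub>G\<^esub> r \<and> q \<otimes>\<^bsub>G\<^esub> r \<in> H \<longrightarrow> q \<in> H \<and> r \<in> H))
       \<and> ((\<forall>q\<in>carrier G. \<forall>r\<in>carrier G.
              R \<one>\<^bsub>G\<^esub> q \<and> R \<one>\<^bsub>G\<^esub> r \<and> q \<otimes>\<^bsub>G\<^esub> r \<in> H \<longrightarrow> q \<in> H \<and> r \<in> H)
           \<and> H \<lhd> G \<longrightarrow> oriented_group (G LMod H) (quot_rel G R H))"
proof -
  interpret og_ctx G R H using assms by (simp add: og_ctx_def)
  show ?thesis using part1_fwd part1_bwd part2 by blast
qed

end
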